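(* For any positive integers $k,\Delta$ with $3 \le k\le \Delta$ and any positive integers $x_1,\dots,x_k$ with $1\le x_j \le \Delta$, $$ \frac{2}{k-1} \sum_{1\le i<j \le k} \frac1{x_i+x_j+2k-4} \le \sum_{j=1}^k \frac1{x_j+k} \le 2\,\frac{\Delta+2k-3}{k^2-1} \sum_{1\le i<j \le k} \frac1{x_i+x_j+2k-4} \, . $$ *)

theory Defs
  imports Complex_Main
begin

end

theory Submission imports Defs begin
lemma aux_frac: "(S::real) > 0 \<Longrightarrow> M > 0 \<Longrightarrow> M \<le> N*S \<Longrightarrow> 1/S \<le> N/M"
  by (simp add: divide_simps mult.commute)

lemma pairL:
  fixes x y k :: real assumes "1 \<le> x" "1 \<le> y" "3 \<le> k"
  shows "1 / (x + y + 2*k - 4) \<le> (1/(x+k) + 1/(y+k))/2"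
proof -
  have "2*(x+k)*(y+k) \<le> ((x+k)+(y+k))*(x+y+2*k-4)"
  proof -
    have "(x+k)*(x+k) \<ge> 4*(x+k)" "(y+k)*(y+k) \<ge> 4*(y+k)" using assms mult_right_mono[of 4 "x+k" "x+k"] mult_right_mono[of 4 "y+k" "y+k"] by (auto simp: mult_ac)
    then show ?thesis by (simp add: algebra_simps)
  qed
  note key = this
  have pos: "x+k > 0" "y+k>0" "x+y+2*k-4 > 0" using assms by auto
  have "1 / (x + y + 2*k - 4) \<le> ((x+k)+(y+k))/(2*((x+k)*(y+k)))"
    using key pos mult_pos_pos[OF pos(1) pos(2)] by (intro aux_frac) (auto simp: algebra_simps)
  also have "\<dots> = (1/(x+k) + 1/(y+k))/2" using pos by (simp add: field_simps)
  finally show ?thesis .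
qed

lemma pairU:
  fixes x y k D :: real assumes "1 \<le> x" "1 \<le> y" "3 \<le> k" "x \<le> D" "y \<le> D"
  shows "1/(x+k) + 1/(y+k) \<le> 2*(D+2*k-3)/(k+1) * (1 / (x + y + 2*k - 4))"
proof -
  define p where "p = k+1"
  define s where "s = x - 1"
  define t where "t = y - 1"
  define E where "E = D - 1"
  have h: "p*s*(E-s) \<ge> 0" "p*t*(E-t) \<ge> 0" "s*t*(p-4) \<ge> 0" "p*p*(E-s) \<ge> 0" "p*p*(E-t) \<ge> 0"
     "p*s*(p-4) \<ge> 0" "p*t*(p-4) \<ge> 0" "E*p*s \<ge> 0" "E*p*t \<ge> 0" "E*s*t \<ge> 0"
    using assms by (auto simp: p_def s_def t_def E_def)
  have key: "p*((x+k)+(y+k))*(x+y+2*k-4) \<le> 2*(D+2*k-3)*((x+k)*(y+k))"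
    using h unfolding p_def s_def t_def E_def by (simp add: algebra_simps) 
  have pos: "x+k > 0" "y+k>0" "x+y+2*k-4 > 0" "p > 0" using assms p_def by auto
  have "1/(x+k) + 1/(y+k) = ((x+k)+(y+k))/((x+k)*(y+k))" using pos by (simp add: field_simps)
  also have "\<dots> \<le> 2*(D+2*k-3)/(p*(x+y+2*k-4))"
    using key pos by (simp add: divide_le_eq le_divide_eq mult_ac)
  also have "\<dots> = 2*(D+2*k-3)/(k+1) * (1 / (x + y + 2*k - 4))" by (simp add: p_def)
  finally show ?thesis .
qed

definition PS :: "nat \<Rightarrow> (nat \<times> nat) set" where
  "PS n = {(i, j). 1 \<le> i \<and> i < j \<and> j \<le> n}"

lemma PS_fin: "finite (PS n)"
  by (rule finite_subset[of _ "{1..n} \<times> {1..n}"]) (auto simp: PS_def)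

lemma PS_Suc: "PS (Suc n) = PS n \<union> (\<lambda>i. (i, Suc n)) ` {1..n}"
  by (auto simp: PS_def)

lemma PS_sum_Suc: "(\<Sum>p\<in>PS (Suc n). g p) = (\<Sum>p\<in>PS n. g p) + (\<Sum>i=1..n. g (i, Suc n))"
proof -
  have "(\<Sum>p\<in>PS (Suc n). g p) = (\<Sum>p\<in>PS n. g p) + (\<Sum>p\<in>(\<lambda>i. (i, Suc n)) ` {1..n}. g p)"
    unfolding PS_Suc using PS_fin[of n] by (intro sum.union_disjoint) (auto simp: PS_def)
  also have "(\<Sum>p\<in>(\<lambda>i. (i, Suc n)) ` {1..n}. g p) = (\<Sum>i=1..n. g (i, Suc n))"
    by (subst sum.reindex) (auto simp: inj_on_def)
  finally show ?thesis .
qed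

lemma PS_double: "(\<Sum>(i,j)\<in>PS n. f i + f j) = (real n - 1) * (\<Sum>j=1..n. f j :: real)"
proof (induction n)
  case 0
  have "PS 0 = {}" by (auto simp: PS_def)
  then show ?case by simp
next
  case (Suc n)
  have "(\<Sum>(i,j)\<in>PS (Suc n). f i + f j) = (real n - 1) * (\<Sum>j=1..n. f j) + (\<Sum>i=1..n. f i + f (Suc n))"
    using Suc by (simp add: PS_sum_Suc)
  also have "\<dots> = real n * (\<Sum>j=1..Suc n. f j)"
    by (simp add: sum.distrib algebra_simps)
  finally show ?case by simp
qed

theorem lemma3p3:
  fixes k \<Delta> :: nat and x :: "nat \<Rightarrow> nat"
  assumes "3 \<le> k" and "k \<le> \<Delta>"
    and "\<And>j. j \<in> {1..k} \<Longrightarrow> 1 \<le> x j \<and> x j \<le> \<Delta>"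
  shows "2 / (real k - 1) * (\<Sum>(i, j) \<in> {(i, j). 1 \<le> i \<and> i < j \<and> j \<le> k}.
             1 / (real (x i) + real (x j) + 2 * real k - 4))
           \<le> (\<Sum>j = 1..k. 1 / (real (x j) + real k))
       \<and> (\<Sum>j = 1..k. 1 / (real (x j) + real k))
           \<le> 2 * (real \<Delta> + 2 * real k - 3) / ((real k)\<^sup>2 - 1) *
             (\<Sum>(i, j) \<in> {(i, j). 1 \<le> i \<and> i < j \<and> j \<le> k}.
               1 / (real (x i) + real (x j) + 2 * real k - 4))"
proof -
  define f where "f j = 1 / (real (x j) + real k)" for j
  define h where "h p = 1 / (real (x (fst p)) + real (x (snd p)) + 2 * real k - 4)" for p
  define C where "C = 2 * (real \<Delta> + 2 * real k - 3) / (real k + 1)"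
  have S: "{(i, j). 1 \<le> i \<and> i < j \<and> j \<le> k} = PS k" by (simp add: PS_def)
  have P: "(\<Sum>(i, j) \<in> PS k. 1 / (real (x i) + real (x j) + 2 * real k - 4)) = (\<Sum>p\<in>PS k. h p)"
    by (simp add: h_def case_prod_beta)
  have F: "(\<Sum>j = 1..k. 1 / (real (x j) + real k)) = (\<Sum>j = 1..k. f j)" by (simp add: f_def)
  have mem: "p \<in> PS k \<Longrightarrow> fst p \<in> {1..k} \<and> snd p \<in> {1..k}" for p by (auto simp: PS_def)
  have D: "(\<Sum>p\<in>PS k. f (fst p) + f (snd p)) = (real k - 1) * (\<Sum>j=1..k. f j)"
    using PS_double[of f k] by (simp add: case_prod_beta)
  have k1: "real k - 1 > 0" using assms by simp
  have L: "(\<Sum>p\<in>PS k. h p) \<le> (\<Sum>p\<in>PS k. (f (fst p) + f (snd p)) / 2)"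
  proof (rule sum_mono)
    fix p assume "p \<in> PS k"
    from mem[OF this] assms(3) have "1 \<le> real (x (fst p))" "1 \<le> real (x (snd p))" by auto
    from pairL[OF this, of "real k"] assms(1) show "h p \<le> (f (fst p) + f (snd p)) / 2"
      by (simp add: h_def f_def)
  qed
  have U: "(\<Sum>p\<in>PS k. f (fst p) + f (snd p)) \<le> (\<Sum>p\<in>PS k. C * h p)"
  proof (rule sum_mono)
    fix p assume "p \<in> PS k"
    from mem[OF this] assms(3) have "1 \<le> real (x (fst p))" "1 \<le> real (x (snd p))"
       "real (x (fst p)) \<le> real \<Delta>" "real (x (snd p)) \<le> real \<Delta>" by auto
    from pairU[OF this(1,2) _ this(3,4), of "real k"] assms(1) show "f (fst p) + f (snd p) \<le> C * h p"
      by (simp add: h_def f_def C_def)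
  qed
  have first: "2 / (real k - 1) * (\<Sum>p\<in>PS k. h p) \<le> (\<Sum>j=1..k. f j)"
  proof -
    have "(\<Sum>p\<in>PS k. h p) \<le> (real k - 1) * (\<Sum>j=1..k. f j) / 2"
      using L D by (simp add: sum_divide_distrib[symmetric])
    then show ?thesis using k1 by (simp add: field_simps)
  qed
  have second: "(\<Sum>j=1..k. f j) \<le> 2 * (real \<Delta> + 2 * real k - 3) / ((real k)\<^sup>2 - 1) * (\<Sum>p\<in>PS k. h p)"
  proof -
    have "(real k - 1) * (\<Sum>j=1..k. f j) \<le> C * (\<Sum>p\<in>PS k. h p)"
      using U D by (simp add: sum_distrib_left)
    hence "(\<Sum>j=1..k. f j) \<le> C * (\<Sum>p\<in>PS k. h p) / (real k - 1)"
      using k1 by (simp add: field_simps)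
    also have "\<dots> = 2 * (real \<Delta> + 2 * real k - 3) / ((real k)\<^sup>2 - 1) * (\<Sum>p\<in>PS k. h p)"
      using k1 by (simp add: C_def power2_eq_square field_simps)
    finally show ?thesis .
  qed
  show ?thesis unfolding S P F using first second by simp
qed

end
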